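(* Let $X \subseteq \mathbb{Z}^n$ be a closed set, $c \in \mathbb{R}^n$, $Q$ an $n\times n$ symmetric positive semidefinite matrix, and $\Omega > 0$. Define $h:\mathbb{R}^n \times \mathbb{R}_+ \to \mathbb{R}\cup\{+\infty\}$ by $h(x,t) = \frac{x'Qx}{t}$ if $t>0$; $h(x,0) = 0$ if $x'Qx = 0$; and $h(x,0) = +\infty$ otherwise. Let $g(x,t) = c'x + \frac{\Omega}{2}h(x,t) + \frac{\Omega}{2}t$ and $f(t) = \min_{x \in X} g(x,t)$ for $t \ge 0$, and for each $t\ge 0$ let $x(t) \in X$ be a minimizer attaining $f(t)$. If $f$ has a local minimum at $\bar t > 0$, then $$c'x(\bar t) + \Omega\sqrt{x(\bar t)'Qx(\bar t)} = f(\bar t).$$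
   Context: $h$ is the closure of the perspective function of the convex quadratic $q(x)=x'Qx$. The minimum defining $f(t)$ is assumed to be attained, and $x(t)$ denotes a minimizer. *)

theory Defs
  imports "HOL-Analysis.Analysis"
begin

text \<open>Closure of the perspective function of q(x) = x'Qx, valued in the extended reals.\<close>
definition persp_h :: "real^'n^'n \<Rightarrow> real^'n \<Rightarrow> real \<Rightarrow> ereal" where
  "persp_h Q x t =
     (if t > 0 then ereal (x \<bullet> (Q *v x) / t)
      else if x \<bullet> (Q *v x) = 0 then 0 else \<infinity>)"

definition g_fun :: "real^'n \<Rightarrow> real^'n^'n \<Rightarrow> real \<Rightarrow> real^'n \<Rightarrow> real \<Rightarrow> ereal" where
  "g_fun c Q \<Omega> x t = ereal (c \<bullet> x) + ereal (\<Omega> / 2) * persp_h Q x t + ereal (\<Omega> / 2 * t)"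

text \<open>f(t) = min over X of g(x,t); written as an infimum, attainment is assumed separately.\<close>
definition f_fun :: "(real^'n) set \<Rightarrow> real^'n \<Rightarrow> real^'n^'n \<Rightarrow> real \<Rightarrow> real \<Rightarrow> ereal" where
  "f_fun X c Q \<Omega> t = (INF x\<in>X. g_fun c Q \<Omega> x t)"

end

theory Submission
  imports Defs
begin

lemma key1:
  fixes t s q :: real
  assumes "0 < t" "t < s" "q < t * s"
  shows "q / t + t < q / s + s"
proof -
  have "(q / s + s) - (q / t + t) = (s - t) * (t * s - q) / (t * s)"
    using assms by (simp add: field_simps)
  also have "... > 0" using assms by (intro divide_pos_pos mult_pos_pos) auto
  finally show ?thesis by simp
qed

lemma key2:
  fixes t s q :: real
  assumes "0 < s" "s < t" "t * s < q"
  shows "q / t + t < q / s + s"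
proof -
  have "(q / s + s) - (q / t + t) = (t - s) * (q - t * s) / (t * s)"
    using assms by (simp add: field_simps)
  also have "... > 0" using assms by (intro divide_pos_pos mult_pos_pos) auto
  finally show ?thesis by simp
qed

lemma aux1:
  fixes r b d :: real
  assumes "r < b" "0 \<le> r" "0 < d"
  shows "max (b - d/2) ((b + r)/2) < b \<and> r < max (b - d/2) ((b + r)/2) \<and>
    \<bar>max (b - d/2) ((b + r)/2) - b\<bar> < d \<and> 0 < max (b - d/2) ((b + r)/2)"
proof (cases "b - d/2 \<le> (b + r)/2")
  case True
  then have "max (b - d/2) ((b + r)/2) = (b+r)/2" by simp
  then show ?thesis using assms True by simp
next
  case False
  then have "max (b - d/2) ((b + r)/2) = b - d/2" by simp
  then show ?thesis using assms False by simp
qed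

lemma aux2:
  fixes r b d :: real
  assumes "b < r" "0 < d" "0 < b"
  shows "b < min (b + d/2) ((b + r)/2) \<and> min (b + d/2) ((b + r)/2) < r \<and>
    \<bar>min (b + d/2) ((b + r)/2) - b\<bar> < d \<and> 0 < min (b + d/2) ((b + r)/2)"
  using assms unfolding min_def abs_if by (auto split: if_splits; linarith)

lemma g_pos:
  "t > 0 \<Longrightarrow> g_fun c Q \<Omega> x t = ereal (c \<bullet> x + \<Omega> / 2 * (x \<bullet> (Q *v x) / t) + \<Omega> / 2 * t)"
  by (simp add: g_fun_def persp_h_def)

theorem proposition2:
  fixes X :: "(real^'n) set" and c :: "real^'n" and Q :: "real^'n^'n"
    and \<Omega> :: real and xm :: "real \<Rightarrow> real^'n" and tbar :: real
  assumes X_int: "X \<subseteq> {x. \<forall>i. x $ i \<in> \<int>}"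
    and X_closed: "closed X"
    and Q_sym: "transpose Q = Q"
    and Q_psd: "\<forall>v. 0 \<le> v \<bullet> (Q *v v)"
    and \<Omega>_pos: "\<Omega> > 0"
    and xm_in: "\<forall>t\<ge>0. xm t \<in> X"
    and xm_min: "\<forall>t\<ge>0. g_fun c Q \<Omega> (xm t) t = f_fun X c Q \<Omega> t"
    and tbar_pos: "tbar > 0"
    and loc_min: "\<exists>\<delta>>0. \<forall>t. t \<ge> 0 \<and> \<bar>t - tbar\<bar> < \<delta> \<longrightarrow>
                     f_fun X c Q \<Omega> tbar \<le> f_fun X c Q \<Omega> t"
  shows "ereal (c \<bullet> xm tbar + \<Omega> * sqrt (xm tbar \<bullet> (Q *v xm tbar))) = f_fun X c Q \<Omega> tbar"
proof -
  obtain \<delta> where d: "\<delta> > 0" and dm: "\<forall>t. t \<ge> 0 \<and> \<bar>t - tbar\<bar> < \<delta> \<longrightarrow>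
                     f_fun X c Q \<Omega> tbar \<le> f_fun X c Q \<Omega> t" using loc_min by blast
  define xb where "xb = xm tbar"
  define q where "q = xb \<bullet> (Q *v xb)"
  define a where "a = c \<bullet> xb"
  define \<phi> where "\<phi> t = a + \<Omega> / 2 * (q / t) + \<Omega> / 2 * t" for t
  have q0: "q \<ge> 0" using Q_psd q_def by simp
  have xbX: "xb \<in> X" using xm_in tbar_pos xb_def by simp
  have fb: "f_fun X c Q \<Omega> tbar = ereal (\<phi> tbar)"
  proof -
    have "f_fun X c Q \<Omega> tbar = g_fun c Q \<Omega> xb tbar" using xm_min tbar_pos xb_def by simp
    also have "... = ereal (\<phi> tbar)" using g_pos[OF tbar_pos] by (simp add: \<phi>_def a_def q_def)
    finally show ?thesis .
  qed
  have le: "\<phi> tbar \<le> \<phi> t" if "t > 0" "\<bar>t - tbar\<bar> < \<delta>" for t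
  proof -
    have "f_fun X c Q \<Omega> tbar \<le> f_fun X c Q \<Omega> t" using dm that by simp
    also have "... \<le> g_fun c Q \<Omega> xb t" unfolding f_fun_def using xbX by (rule INF_lower)
    also have "... = ereal (\<phi> t)" using g_pos[OF that(1)] by (simp add: \<phi>_def a_def q_def)
    finally show ?thesis using fb by simp
  qed
  have sq: "tbar * tbar = q"
  proof (rule ccontr)
    assume ne: "tbar * tbar \<noteq> q"
    have qt: "q / tbar * tbar = q" using tbar_pos by simp
    show False
    proof (cases "tbar * tbar > q")
      case True
      define t where "t = max (tbar - \<delta>/2) ((tbar + q/tbar)/2)"
      have "q / tbar < tbar" using True tbar_pos by (simp add: divide_less_eq)
      moreover have "q / tbar \<ge> 0" using q0 tbar_pos by simp
      ultimately have t1: "t < tbar" "t > q / tbar" "\<bar>t - tbar\<bar> < \<delta>" "t > 0"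
        using d unfolding t_def using aux1[of "q/tbar" tbar \<delta>] by auto
      have "q < t * tbar" using t1(2) tbar_pos by (simp add: divide_less_eq)
      hence "q / t + t < q / tbar + tbar" using key1[OF t1(4) t1(1)] by simp
      hence "\<phi> t < \<phi> tbar" using \<Omega>_pos unfolding \<phi>_def
        by (smt (verit, best) distrib_left mult_strict_left_mono half_gt_zero)
      thus False using le[OF t1(4) t1(3)] by simp
    next
      case False
      hence Tl: "tbar * tbar < q" using ne by simp
      define t where "t = min (tbar + \<delta>/2) ((tbar + q/tbar)/2)"
      have "q / tbar > tbar" using Tl tbar_pos by (simp add: less_divide_eq)
      hence t1: "t > tbar" "t < q / tbar" "\<bar>t - tbar\<bar> < \<delta>" "t > 0"
        using d tbar_pos unfolding t_def using aux2[of tbar "q/tbar" \<delta>] by auto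
      have "t * tbar < q" using t1(2) tbar_pos by (simp add: less_divide_eq)
      hence "q / t + t < q / tbar + tbar" using key2[OF tbar_pos t1(1)] by simp
      hence "\<phi> t < \<phi> tbar" using \<Omega>_pos unfolding \<phi>_def
        by (smt (verit, best) distrib_left mult_strict_left_mono half_gt_zero)
      thus False using le[OF t1(4) t1(3)] by simp
    qed
  qed
  have "sqrt q = tbar" using sq tbar_pos by (metis less_eq_real_def real_sqrt_abs2 abs_of_pos)
  hence "a + \<Omega> * sqrt q = \<phi> tbar" unfolding \<phi>_def using sq tbar_pos
    by (simp add: field_simps)
  thus ?thesis using fb by (simp add: a_def q_def xb_def)
qed

end
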